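(* Let $a_0,a_2\in\mathbb{C}$. The second-order recursion $$z_n = \frac{a_2 z_{n-2} + z_{n-1} + a_0}{z_{n-2}}$$ is periodic with period $6$ (i.e. $z_7=z_1$ and $z_8=z_2$ in $\mathbb{C}(z_1,z_2)$) if and only if $a_0=0$ and $a_2=0$, i.e. the recursion is $z_n=z_{n-1}/z_{n-2}$.
   Context: Let $z_1,z_2$ be independent indeterminates over $\mathbb{C}$ and define $z_n\in\mathbb{C}(z_1,z_2)$ for $n\ge3$ by the recursion. A second-order recursion is periodic with period $k$ if all iterates are well-defined elements of $\mathbb{C}(z_1,z_2)$ (no denominator identically zero) and $z_{k+1}=z_1$, $z_{k+2}=z_2$. *)

theory Defs
  imports "HOL-Computational_Algebra.Polynomial" "HOL-Computational_Algebra.Fraction_Field"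
begin

text \<open>The field C(z1,z2) of rational functions in two independent indeterminates,
realised as the fraction field of C[z1][z2].\<close>
type_synonym rat2 = "complex poly poly fract"

definition Z1 :: rat2 where "Z1 = Fract [:[:0, 1:]:] 1"
definition Z2 :: rat2 where "Z2 = Fract [:0, 1:] 1"
definition cst :: "complex \<Rightarrow> rat2" where "cst c = Fract [:[:c:]:] 1"

text \<open>Iterates z_n (n \<ge> 1) of the recursion
  z_n = (a2 z_{n-2} + z_{n-1} + a0) / z_{n-2}, starting from z_1 = Z1, z_2 = Z2.
  (Index 0 is unused.)\<close>
fun zseq :: "complex \<Rightarrow> complex \<Rightarrow> nat \<Rightarrow> rat2" where
  "zseq a0 a2 0 = 0"
| "zseq a0 a2 (Suc 0) = Z1"
| "zseq a0 a2 (Suc (Suc 0)) = Z2"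
| "zseq a0 a2 (Suc (Suc (Suc n))) =
     (cst a2 * zseq a0 a2 (Suc n) + zseq a0 a2 (Suc (Suc n)) + cst a0) / zseq a0 a2 (Suc n)"

text \<open>Periodic with period k: the denominators z_1,...,z_k used to form z_3,...,z_{k+2}
  are not identically zero, and z_{k+1} = z_1, z_{k+2} = z_2.\<close>
definition periodic_with :: "complex \<Rightarrow> complex \<Rightarrow> nat \<Rightarrow> bool" where
  "periodic_with a0 a2 k \<longleftrightarrow>
     (\<forall>n\<in>{1..k}. zseq a0 a2 n \<noteq> 0) \<and>
     zseq a0 a2 (k + 1) = zseq a0 a2 1 \<and> zseq a0 a2 (k + 2) = zseq a0 a2 2"

end

theory Submission
  imports Defs
begin

lemma Fract1_eq: "Fract (p::complex poly poly) 1 = Fract q 1 \<Longrightarrow> p = q"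
  by (simp add: eq_fract)

lemma Z1_nz: "Z1 \<noteq> 0"
  by (simp add: Z1_def Zero_fract_def eq_fract)

lemma Z2_nz: "Z2 \<noteq> 0"
  by (simp add: Z2_def Zero_fract_def eq_fract)

lemma key_identity:
  fixes a b :: complex
  assumes "Z2 * (Z1 + cst a + cst a * (Z2 - cst b)) * (cst b * Z1 + Z2 + cst a) =
    (Z1 - cst b) * (Z2 - cst b) * (cst b * Z2 * (cst b * Z1 + Z2 + cst a) + Z1 * (cst b * Z2 + cst a)
      + (cst b * Z1 + Z2 + cst a) + cst a * Z1 * Z2)"
  shows "yv * (xv + a + a * (yv - b)) * (b * xv + yv + a) =
    (xv - b) * (yv - b) * (b * yv * (b * xv + yv + a) + xv * (b * yv + a)
      + (b * xv + yv + a) + a * xv * yv)"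
proof -
  let ?X = "[:[:0, 1:]:] :: complex poly poly"
  let ?Y = "[:0, 1:] :: complex poly poly"
  let ?C = "\<lambda>c::complex. [:[:c:]:] :: complex poly poly"
  have "Fract (?Y * (?X + ?C a + ?C a * (?Y - ?C b)) * (?C b * ?X + ?Y + ?C a)) 1 =
    Fract ((?X - ?C b) * (?Y - ?C b) * (?C b * ?Y * (?C b * ?X + ?Y + ?C a) + ?X * (?C b * ?Y + ?C a)
      + (?C b * ?X + ?Y + ?C a) + ?C a * ?X * ?Y)) 1"
    using assms unfolding Z1_def Z2_def cst_def
    by (simp only: add_fract mult_fract diff_fract mult_1 mult_1_right one_neq_zero not_False_eq_True)
  from Fract1_eq[OF this]
  have "poly (poly (?Y * (?X + ?C a + ?C a * (?Y - ?C b)) * (?C b * ?X + ?Y + ?C a)) [:yv:]) xv =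
    poly (poly ((?X - ?C b) * (?Y - ?C b) * (?C b * ?Y * (?C b * ?X + ?Y + ?C a) + ?X * (?C b * ?Y + ?C a)
      + (?C b * ?X + ?Y + ?C a) + ?C a * ?X * ?Y)) [:yv:]) xv" by simp
  then show ?thesis by (simp add: algebra_simps)
qed


lemma cst0: "cst 0 = 0"
  by (simp add: cst_def Zero_fract_def)

lemma zs:
  "zseq a0 a2 3 = (cst a2 * zseq a0 a2 1 + zseq a0 a2 2 + cst a0) / zseq a0 a2 1"
  "zseq a0 a2 4 = (cst a2 * zseq a0 a2 2 + zseq a0 a2 3 + cst a0) / zseq a0 a2 2"
  "zseq a0 a2 5 = (cst a2 * zseq a0 a2 3 + zseq a0 a2 4 + cst a0) / zseq a0 a2 3"
  "zseq a0 a2 6 = (cst a2 * zseq a0 a2 4 + zseq a0 a2 5 + cst a0) / zseq a0 a2 4"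
  "zseq a0 a2 7 = (cst a2 * zseq a0 a2 5 + zseq a0 a2 6 + cst a0) / zseq a0 a2 5"
  "zseq a0 a2 8 = (cst a2 * zseq a0 a2 6 + zseq a0 a2 7 + cst a0) / zseq a0 a2 6"
  "zseq a0 a2 1 = Z1" "zseq a0 a2 2 = Z2"
  by (simp_all add: eval_nat_numeral)

theorem mainTheorem5:
  fixes a0 a2 :: complex
  shows "periodic_with a0 a2 6 \<longleftrightarrow> a0 = 0 \<and> a2 = 0"
proof
  assume P: "periodic_with a0 a2 6"
  define x where "x = Z1"
  define y where "y = Z2"
  define A where "A = cst a0"
  define B where "B = cst a2"
  define z where "z = zseq a0 a2"
  have nz: "z n \<noteq> 0" if "n \<in> {1..6}" for n using P that unfolding periodic_with_def z_def by auto
  have x7: "z 7 = x" and y8: "z 8 = y" using P unfolding periodic_with_def z_def x_def y_def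
    by (simp_all add: zs(7,8))
  have z1: "z 1 = x" and z2: "z 2 = y" by (simp_all add: z_def x_def y_def zs(7,8))
  have xnz: "x \<noteq> 0" and ynz: "y \<noteq> 0" using Z1_nz Z2_nz x_def y_def by auto
  have nz3: "z 3 \<noteq> 0" and nz5: "z 5 \<noteq> 0" and nz6: "z 6 \<noteq> 0" using nz by auto
  have h3: "x * z 3 = B*x + y + A" using xnz unfolding z_def x_def y_def A_def B_def by (simp add: zs(1,7,8))
  have h4: "y * z 4 = B*y + z 3 + A" using ynz unfolding z_def x_def y_def A_def B_def by (simp add: zs(2,8))
  have h5: "z 5 * z 3 = B*z 3 + z 4 + A" using nz3 unfolding z_def A_def B_def by (simp add: zs(3))
  have h7: "x * z 5 = B * z 5 + z 6 + A" using nz5 x7 unfolding z_def x_def A_def B_def by (simp add: zs(5) field_simps)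
  have h8: "y * z 6 = B * z 6 + x + A" using nz6 y8 x7 unfolding z_def x_def y_def A_def B_def by (simp add: zs(6) field_simps)
  have e6: "(y - B) * z 6 = x + A" using h8 by (simp add: algebra_simps)
  have e5: "(x - B) * (y - B) * z 5 = x + A + A * (y - B)"
  proof -
    have "(x - B) * (y - B) * z 5 = (y - B) * ((x - B) * z 5)" by (simp add: algebra_simps)
    also have "(x - B) * z 5 = z 6 + A" using h7 by (simp add: algebra_simps)
    finally show ?thesis using e6 by (simp add: algebra_simps)
  qed
  have N4: "x * y * z 4 = x * (B*y + A) + (B*x + y + A)"
  proof -
    have "x * y * z 4 = x * (y * z 4)" by (simp add: algebra_simps)
    also have "\<dots> = x * (B*y + A) + x * z 3" using h4 by (simp add: algebra_simps)
    finally show ?thesis using h3 by simp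
  qed
  have "y * (x + A + A * (y - B)) * (B*x + y + A) = y * ((x - B) * (y - B) * z 5) * (x * z 3)"
    using e5 h3 by simp
  also have "\<dots> = (x - B) * (y - B) * (x * y * (z 5 * z 3))" by (simp add: algebra_simps)
  also have "\<dots> = (x - B) * (y - B) * (B * y * (x * z 3) + x * y * z 4 + A * x * y)"
    using h5 by (simp add: algebra_simps)
  also have "\<dots> = (x - B) * (y - B) * (B * y * (B * x + y + A) + x * (B * y + A) + (B * x + y + A) + A * x * y)"
    using h3 N4 by simp
  finally have "y * (x + A + A * (y - B)) * (B*x + y + A) =
     (x - B) * (y - B) * (B * y * (B * x + y + A) + x * (B * y + A) + (B * x + y + A) + A * x * y)" .
  then have K: "\<And>xv yv. yv * (xv + a0 + a0 * (yv - a2)) * (a2 * xv + yv + a0) =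
    (xv - a2) * (yv - a2) * (a2 * yv * (a2 * xv + yv + a0) + xv * (a2 * yv + a0)
      + (a2 * xv + yv + a0) + a0 * xv * yv)"
    unfolding x_def y_def A_def B_def by (rule key_identity)
  have b0: "a2 = 0"
  proof (rule ccontr)
    assume bnz: "a2 \<noteq> 0"
    have "a2 * 1 * (a2 * (1 - a0) + a2 + a0) = 0" using K[where xv="1 - a0" and yv=a2] by (simp add: algebra_simps)
    moreover have "a2 * 2 * (a2 * (2 - a0) + a2 + a0) = 0" using K[where xv="2 - a0" and yv=a2] by (simp add: algebra_simps)
    ultimately have "a2 * (1 - a0) + a2 + a0 = 0" "a2 * (2 - a0) + a2 + a0 = 0" using bnz by auto
    moreover have "(a2 * (2 - a0) + a2 + a0) - (a2 * (1 - a0) + a2 + a0) = a2" by (simp add: algebra_simps)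
    ultimately have "a2 = 0" by simp
    then show False using bnz by simp
  qed
  have "a0 * (1 + a0) * 2 = 0" using K[where xv=0 and yv=1] b0 by (simp add: algebra_simps)
  moreover have "a0 * (2 + a0) * 6 = 0" using K[where xv=0 and yv=2] b0 by (simp add: algebra_simps)
  ultimately have "a0 = 0"
  proof (cases "a0 = 0")
    case False
    assume "a0 * (1 + a0) * 2 = 0" "a0 * (2 + a0) * 6 = 0"
    then have "1 + a0 = 0" "2 + a0 = 0" using False by auto
    then have "(2 + a0) - (1 + a0) = 0" by simp
    then show ?thesis by simp
  qed
  with b0 show "a0 = 0 \<and> a2 = 0" by simp
next
  assume "a0 = 0 \<and> a2 = 0"
  then have a: "a0 = 0" "a2 = 0" by auto
  have n1: "Z1 \<noteq> 0" and n2: "Z2 \<noteq> 0" by (rule Z1_nz, rule Z2_nz)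
  have v: "zseq a0 a2 3 = Z2 / Z1" "zseq a0 a2 4 = 1 / Z1" "zseq a0 a2 5 = 1 / Z2"
     "zseq a0 a2 6 = Z1 / Z2" "zseq a0 a2 7 = Z1" "zseq a0 a2 8 = Z2"
    using n1 n2 by (simp_all add: zs a cst0 field_simps)
  have "\<forall>n\<in>{1..6}. zseq a0 a2 n \<noteq> 0"
  proof
    fix n :: nat assume "n \<in> {1..6}"
    then have "n = 1 \<or> n = 2 \<or> n = 3 \<or> n = 4 \<or> n = 5 \<or> n = 6" by auto
    then show "zseq a0 a2 n \<noteq> 0" using n1 n2 by (auto simp: v zs(7,8))
  qed
  then show "periodic_with a0 a2 6" unfolding periodic_with_def by (simp add: v zs(7,8))
qed

end
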